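(* Let $n\ge 2$ and consider the star network on agents $\{1,\dots,n\}$ with central agent $1$ and peripheral agents $2,\dots,n$, each peripheral agent linked only to agent $1$. Let $H\in\mathbb{R}^{n\times n}$ have $H_{ii}=1$ for all $i$, $H_{1j}=H_{j1}=\beta$ for $j=2,\dots,n$, and $H_{ij}=0$ otherwise, where $\beta\in\mathbb{R}$. Each agent $i$ has payoff $$u_i(a,\gamma)=-H_{ii}a_i^2-2\sum_{j\neq i}H_{ij}a_ia_j+2\gamma a_i+d_i(a_{-i},\gamma),$$ with a common payoff state $\gamma\in\mathbb{R}$ and public information structures. Suppose $\mu\sim\mathcal{N}(\mu_0,\sigma_0^2)$ and, conditionally on $\mu$, $\gamma\sim\mathcal{N}(\mu,\sigma^2)$ with $\sigma>0$. Under full information disclosure the equilibrium action profile is $a=\gamma H^{-1}\mathbf{1}$ and under no information disclosure it is $a=\mu H^{-1}\mathbf{1}$. Assume that for each agent $i$ the expectation $E[d_i(a_{-i},\gamma)]$ is the same under both policies. If $(n-1)|\beta|<1$, then full information disclosure is preferred over no information disclosure by the central agent and by every peripheral agent, i.e. $E[u_i(\gamma H^{-1}\mathbf{1},\gamma)]>E[u_i(\mu H^{-1}\mathbf{1},\gamma)]$ for every $i\in\{1,\dots,n\}$.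
   Context: $\mathbf{1}$ is the all-ones vector in $\mathbb{R}^n$; $a_{-i}$ denotes the actions of agents other than $i$; $d_i$ is an arbitrary function of $a_{-i}$ and the state. "Public information structure" means all agents receive the same signal; "full information disclosure" reveals $\gamma$, "no information disclosure" leaves agents knowing only $\mu$. Expectations are over the joint distribution of $(\mu,\gamma)$. *)

theory Defs
  imports "HOL-Probability.Probability"
begin

definition star_H :: "nat \<Rightarrow> real \<Rightarrow> nat \<Rightarrow> nat \<Rightarrow> real" where
  "star_H n \<beta> i j =
     (if i \<in> {1..n} \<and> j \<in> {1..n} then
        (if i = j then 1
         else if (i = 1 \<and> j \<noteq> 1) \<or> (j = 1 \<and> i \<noteq> 1) then \<beta> else 0)
      else 0)"

definition Hinv_one :: "nat \<Rightarrow> (nat \<Rightarrow> nat \<Rightarrow> real) \<Rightarrow> nat \<Rightarrow> real" where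
  "Hinv_one n H = (THE v. (\<forall>i\<in>{1..n}. (\<Sum>j=1..n. H i j * v j) = 1)
                        \<and> (\<forall>j. j \<notin> {1..n} \<longrightarrow> v j = 0))"

definition payoff ::
  "nat \<Rightarrow> (nat \<Rightarrow> nat \<Rightarrow> real) \<Rightarrow> (nat \<Rightarrow> (nat \<Rightarrow> real) \<Rightarrow> real \<Rightarrow> real)
     \<Rightarrow> nat \<Rightarrow> (nat \<Rightarrow> real) \<Rightarrow> real \<Rightarrow> real" where
  "payoff n H d i a g =
     - H i i * (a i)\<^sup>2 - 2 * (\<Sum>j\<in>{1..n} - {i}. H i j * a i * a j) + 2 * g * a i + d i a g"

end

theory Submission
  imports Defs
begin


lemma payoff_formula:
  assumes i: "i \<in> {1..n}" and Hii: "H i i = 1"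
    and row: "(\<Sum>j=1..n. H i j * v j) = 1"
  shows "payoff n H d i (\<lambda>j. s * v j) g
       = s\<^sup>2 * (v i)\<^sup>2 - 2 * s\<^sup>2 * v i + 2 * g * s * v i + d i (\<lambda>j. s * v j) g"
proof -
  have "(\<Sum>j\<in>{1..n} - {i}. H i j * v j) = 1 - v i"
    using row i Hii by (simp add: sum_diff1)
  moreover have "(\<Sum>j\<in>{1..n} - {i}. H i j * (s * v i) * (s * v j))
      = s\<^sup>2 * v i * (\<Sum>j\<in>{1..n} - {i}. H i j * v j)"
    by (simp add: sum_distrib_left power2_eq_square algebra_simps)
  ultimately have "(\<Sum>j\<in>{1..n} - {i}. H i j * (s * v i) * (s * v j)) = s\<^sup>2 * v i * (1 - v i)"
    by simp
  then show ?thesis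
    unfolding payoff_def using Hii by (simp add: power2_eq_square algebra_simps)
qed

lemma star_row:
  assumes n2: "n \<ge> 2" and i: "i \<in> {1..n}"
  shows "(\<Sum>j=1..n. star_H n \<beta> i j * v j) =
     (if i = 1 then v 1 + \<beta> * (\<Sum>j=2..n. v j) else \<beta> * v 1 + v i)"
proof -
  have U: "{1..n} = insert 1 {2..n}" using n2 by auto
  have s: "(\<Sum>j=1..n. star_H n \<beta> i j * v j) = star_H n \<beta> i 1 * v 1 + (\<Sum>j=2..n. star_H n \<beta> i j * v j)"
    unfolding U by simp
  show ?thesis
  proof (cases "i = 1")
    case True
    have "(\<Sum>j=2..n. star_H n \<beta> i j * v j) = (\<Sum>j=2..n. \<beta> * v j)"
      by (rule sum.cong) (use True n2 in \<open>auto simp: star_H_def\<close>)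
    then show ?thesis using s True n2 by (simp add: star_H_def sum_distrib_left)
  next
    case False
    have "(\<Sum>j=2..n. star_H n \<beta> i j * v j) = (\<Sum>j=2..n. if j = i then v j else 0)"
      by (rule sum.cong) (use False i in \<open>auto simp: star_H_def\<close>)
    also have "\<dots> = v i" using False i by (simp add: sum.delta)
    finally show ?thesis using s False i n2 by (simp add: star_H_def)
  qed
qed

lemma star_Hinv:
  assumes n2: "n \<ge> 2" and beta: "real (n - 1) * \<bar>\<beta>\<bar> < 1"
  defines "m \<equiv> real (n - 1)"
  defines "D \<equiv> 1 - m * \<beta>\<^sup>2"
  shows "Hinv_one n (star_H n \<beta>) = (\<lambda>j. if j = 1 then (1 - m * \<beta>) / D
            else if j \<in> {2..n} then (1 - \<beta>) / D else 0)"
    and "D > 0" and "1 - m * \<beta> \<noteq> 0" and "1 - \<beta> \<noteq> 0"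
    and "\<forall>i\<in>{1..n}. (\<Sum>j=1..n. star_H n \<beta> i j * Hinv_one n (star_H n \<beta>) j) = 1"
proof -
  have m1: "m \<ge> 1" using n2 unfolding m_def by simp
  have mb: "m * \<bar>\<beta>\<bar> < 1" using beta m_def by simp
  have "1 * \<bar>\<beta>\<bar> \<le> m * \<bar>\<beta>\<bar>" by (rule mult_right_mono) (use m1 in auto)
  then have ab: "\<bar>\<beta>\<bar> < 1" using mb by linarith
  have "\<bar>\<beta>\<bar> * \<bar>\<beta>\<bar> \<le> \<bar>\<beta>\<bar> * 1" by (rule mult_left_mono) (use ab in auto)
  then have b2: "\<beta>\<^sup>2 \<le> \<bar>\<beta>\<bar>" by (simp add: power2_eq_square abs_mult_self_eq)
  have "m * \<beta>\<^sup>2 \<le> m * \<bar>\<beta>\<bar>"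
    by (rule mult_left_mono) (use b2 m1 in auto)
  then show Dp: "D > 0" using mb unfolding D_def by linarith
  have "m * \<beta> \<le> m * \<bar>\<beta>\<bar>" using m1 by (intro mult_left_mono) auto
  then show x0: "1 - m * \<beta> \<noteq> 0" using mb by linarith
  show "1 - \<beta> \<noteq> 0" using ab by linarith
  define w where "w = (\<lambda>j. if j = 1 then (1 - m * \<beta>) / D
            else if j \<in> {2..n} then (1 - \<beta>) / D else 0)"
  have sum2: "(\<Sum>j=2..n. w j) = m * ((1 - \<beta>) / D)"
  proof -
    have "(\<Sum>j=2..n. w j) = (\<Sum>j=2..n. (1 - \<beta>) / D)" by (rule sum.cong) (auto simp: w_def)
    then show ?thesis using n2 by (simp add: m_def)
  qed
  have P: "(\<forall>i\<in>{1..n}. (\<Sum>j=1..n. star_H n \<beta> i j * w j) = 1) \<and> (\<forall>j. j \<notin> {1..n} \<longrightarrow> w j = 0)"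
  proof (intro conjI ballI allI impI)
    fix i assume i: "i \<in> {1..n}"
    show "(\<Sum>j=1..n. star_H n \<beta> i j * w j) = 1"
    proof (cases "i = 1")
      case True
      have "(1 - m * \<beta>) / D + \<beta> * (m * ((1 - \<beta>) / D)) = 1"
        using Dp by (simp add: field_simps D_def power2_eq_square)
      then have "w 1 + \<beta> * (\<Sum>j=2..n. w j) = 1" unfolding sum2 by (simp add: w_def)
      then show ?thesis using True star_row[OF n2 i, of \<beta> w] by simp
    next
      case False
      have "\<beta> * ((1 - m * \<beta>) / D) + (1 - \<beta>) / D = 1"
        using Dp by (simp add: field_simps D_def power2_eq_square)
      then show ?thesis using False i star_row[OF n2 i] by (simp add: w_def)
    qed
  next
    fix j assume "j \<notin> {1..n}" then show "w j = 0" using n2 by (auto simp: w_def)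
  qed
  have HW: "Hinv_one n (star_H n \<beta>) = w"
    unfolding Hinv_one_def
  proof (rule the_equality)
    show "(\<forall>i\<in>{1..n}. (\<Sum>j=1..n. star_H n \<beta> i j * w j) = 1) \<and> (\<forall>j. j \<notin> {1..n} \<longrightarrow> w j = 0)"
      by (rule P)
  next
    fix v assume A: "(\<forall>i\<in>{1..n}. (\<Sum>j = 1..n. star_H n \<beta> i j * v j) = 1) \<and> (\<forall>j. j \<notin> {1..n} \<longrightarrow> v j = 0)"
    have vi: "v i = 1 - \<beta> * v 1" if "i \<in> {2..n}" for i
      using A star_row[OF n2, of i \<beta> v] that by auto
    have "(\<Sum>j=2..n. v j) = (\<Sum>j=2..n. 1 - \<beta> * v 1)" by (rule sum.cong) (auto simp: vi)
    then have "(\<Sum>j=2..n. v j) = m * (1 - \<beta> * v 1)" using n2 by (simp add: m_def)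
    then have "v 1 + \<beta> * (m * (1 - \<beta> * v 1)) = 1"
      using A star_row[OF n2, of 1 \<beta> v] n2 by auto
    then have "v 1 * D = 1 - m * \<beta>" unfolding D_def by (simp add: algebra_simps power2_eq_square)
    then have v1: "v 1 = (1 - m * \<beta>) / D" using Dp by (simp add: field_simps)
    have "1 - \<beta> * ((1 - m * \<beta>) / D) = (1 - \<beta>) / D"
      using Dp by (simp add: field_simps D_def power2_eq_square)
    then show "v = w"
      using A vi v1 by (auto simp: w_def fun_eq_iff)
  qed
  then show "Hinv_one n (star_H n \<beta>) = w" .
  show "\<forall>i\<in>{1..n}. (\<Sum>j=1..n. star_H n \<beta> i j * Hinv_one n (star_H n \<beta>) j) = 1"
    using P HW by simp
qed

theorem proposition1:
  fixes n :: nat and \<beta> \<mu>\<^sub>0 \<sigma>\<^sub>0 \<sigma> :: real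
    and M :: "'w measure" and mu gam :: "'w \<Rightarrow> real"
    and d :: "nat \<Rightarrow> (nat \<Rightarrow> real) \<Rightarrow> real \<Rightarrow> real"
  assumes n2: "n \<ge> 2"
    and P: "prob_space M"
    and sig0: "\<sigma>\<^sub>0 > 0" and sig: "\<sigma> > 0"
    and mu_distr: "distributed M lborel mu (normal_density \<mu>\<^sub>0 \<sigma>\<^sub>0)"
    and noise_distr: "distributed M lborel (\<lambda>w. gam w - mu w) (normal_density 0 \<sigma>)"
    and indep: "prob_space.indep_var M borel mu borel (\<lambda>w. gam w - mu w)"
    and d_dep: "\<And>i a a' g. (\<And>j. j \<noteq> i \<Longrightarrow> a j = a' j) \<Longrightarrow> d i a g = d i a' g"
    and d_int_full: "\<And>i. i \<in> {1..n} \<Longrightarrow>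
          integrable M (\<lambda>w. d i (\<lambda>j. gam w * Hinv_one n (star_H n \<beta>) j) (gam w))"
    and d_int_none: "\<And>i. i \<in> {1..n} \<Longrightarrow>
          integrable M (\<lambda>w. d i (\<lambda>j. mu w * Hinv_one n (star_H n \<beta>) j) (gam w))"
    and d_eq: "\<And>i. i \<in> {1..n} \<Longrightarrow>
          (\<integral>w. d i (\<lambda>j. gam w * Hinv_one n (star_H n \<beta>) j) (gam w) \<partial>M)
        = (\<integral>w. d i (\<lambda>j. mu w * Hinv_one n (star_H n \<beta>) j) (gam w) \<partial>M)"
    and beta: "real (n - 1) * \<bar>\<beta>\<bar> < 1"
  shows "\<forall>i\<in>{1..n}.
     (\<integral>w. payoff n (star_H n \<beta>) d i (\<lambda>j. gam w * Hinv_one n (star_H n \<beta>) j) (gam w) \<partial>M)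
   > (\<integral>w. payoff n (star_H n \<beta>) d i (\<lambda>j. mu w * Hinv_one n (star_H n \<beta>) j) (gam w) \<partial>M)"
proof -
  interpret prob_space M by (rule P)
  define e where "e = (\<lambda>w. gam w - mu w)"
  have gam_eq: "gam w = mu w + e w" for w by (simp add: e_def)
  have e_distr: "distributed M lborel e (normal_density 0 \<sigma>)" using noise_distr by (simp add: e_def)
  have ind: "indep_var borel mu borel e" using indep by (simp add: e_def)
  have mu_m: "mu \<in> borel_measurable M" using distributed_measurable[OF mu_distr] by simp
  have e_m: "e \<in> borel_measurable M" using distributed_measurable[OF e_distr] by simp
  have Imu: "integrable M mu"
    using distributed_integrable[OF mu_distr, of "\<lambda>x. x"] integrable_normal_moment_nz_1[OF sig0, of \<mu>\<^sub>0] by simp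
  have Ie: "integrable M e"
    using distributed_integrable[OF e_distr, of "\<lambda>x. x"] integrable_normal_moment_nz_1[OF sig, of 0] by simp
  have Ee: "expectation e = 0" using normal_distributed_expectation[OF sig e_distr] .
  have Ie2: "integrable M (\<lambda>w. (e w)\<^sup>2)"
    using distributed_integrable[OF e_distr, of "\<lambda>x. x\<^sup>2"] integrable_normal_moment[OF sig, of 0 2] by simp
  have Ee2: "expectation (\<lambda>w. (e w)\<^sup>2) = \<sigma>\<^sup>2"
    using normal_distributed_variance[OF sig e_distr] Ee by simp
  have nd_eq: "(\<lambda>x. normal_density \<mu>\<^sub>0 \<sigma>\<^sub>0 x * x\<^sup>2) = (\<lambda>x. normal_density \<mu>\<^sub>0 \<sigma>\<^sub>0 x * (x - \<mu>\<^sub>0)^2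
        + (2 * \<mu>\<^sub>0 * (normal_density \<mu>\<^sub>0 \<sigma>\<^sub>0 x * x) - \<mu>\<^sub>0\<^sup>2 * normal_density \<mu>\<^sub>0 \<sigma>\<^sub>0 x))"
    by (simp add: fun_eq_iff power2_eq_square algebra_simps)
  have "integrable lborel (\<lambda>x. normal_density \<mu>\<^sub>0 \<sigma>\<^sub>0 x * x\<^sup>2)"
  proof -
    have a: "integrable lborel (\<lambda>x. normal_density \<mu>\<^sub>0 \<sigma>\<^sub>0 x * (x - \<mu>\<^sub>0)^2)"
      using integrable_normal_moment[OF sig0, of \<mu>\<^sub>0 2] .
    have b: "integrable lborel (\<lambda>x. normal_density \<mu>\<^sub>0 \<sigma>\<^sub>0 x * x)"
      using integrable_normal_moment_nz_1[OF sig0, of \<mu>\<^sub>0] .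
    have c: "integrable lborel (normal_density \<mu>\<^sub>0 \<sigma>\<^sub>0)"
      using integrable_normal_density[OF sig0] .
    show ?thesis unfolding nd_eq
      by (rule Bochner_Integration.integrable_add[OF a Bochner_Integration.integrable_diff[OF Bochner_Integration.integrable_mult_right[OF b] Bochner_Integration.integrable_mult_right[OF c]]])
  qed
  then have Imu2: "integrable M (\<lambda>w. (mu w)\<^sup>2)"
    using distributed_integrable[OF mu_distr, of "\<lambda>x. x\<^sup>2"] by simp
  have Emue: "expectation (\<lambda>w. mu w * e w) = 0"
    using indep_var_lebesgue_integral[OF ind Imu Ie] Ee by simp
  have Imue: "integrable M (\<lambda>w. mu w * e w)"
    using indep_var_integrable[OF ind Imu Ie] .
  have n2': "2 \<le> n" using n2 .
  note SH = star_Hinv[OF n2 beta]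
  show ?thesis
  proof
    fix i assume i: "i \<in> {1..n}"
    define V where "V = Hinv_one n (star_H n \<beta>)"
    define c where "c = V i"
    have c0: "c \<noteq> 0"
    proof (cases "i = 1")
      case True then show ?thesis using SH(1) SH(2) SH(3) by (simp add: c_def V_def)
    next
      case False then show ?thesis using SH(1) SH(2) SH(4) i by (simp add: c_def V_def)
    qed
    have Hii: "star_H n \<beta> i i = 1" using i by (simp add: star_H_def)
    have row: "(\<Sum>j=1..n. star_H n \<beta> i j * V j) = 1" using SH(5) i by (simp add: V_def)
    note PF = payoff_formula[of i n "star_H n \<beta>" V, OF i Hii row]
    define dF where "dF = (\<lambda>w. d i (\<lambda>j. gam w * V j) (gam w))"
    define dN where "dN = (\<lambda>w. d i (\<lambda>j. mu w * V j) (gam w))"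
    have L: "payoff n (star_H n \<beta>) d i (\<lambda>j. gam w * V j) (gam w)
       = c\<^sup>2 * (mu w)\<^sup>2 + (2 * c\<^sup>2 * (mu w * e w) + (c\<^sup>2 * (e w)\<^sup>2 + dF w))" for w
      unfolding PF dF_def c_def gam_eq by (simp add: power2_eq_square algebra_simps)
    have R: "payoff n (star_H n \<beta>) d i (\<lambda>j. mu w * V j) (gam w)
       = c\<^sup>2 * (mu w)\<^sup>2 + (2 * c * (mu w * e w) + dN w)" for w
      unfolding PF dN_def c_def gam_eq by (simp add: power2_eq_square algebra_simps)
    have IF: "integrable M dF" using d_int_full[OF i] by (simp add: dF_def V_def)
    have IN: "integrable M dN" using d_int_none[OF i] by (simp add: dN_def V_def)
    have EFN: "integral\<^sup>L M dF = integral\<^sup>L M dN" using d_eq[OF i] by (simp add: dF_def dN_def V_def)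
    have hmu2: "has_bochner_integral M (\<lambda>w. (mu w)\<^sup>2) (expectation (\<lambda>w. (mu w)\<^sup>2))"
      using Imu2 by (rule has_bochner_integral_integrable)
    have hmue: "has_bochner_integral M (\<lambda>w. mu w * e w) 0"
      using Imue Emue by (simp add: has_bochner_integral_iff)
    have he2: "has_bochner_integral M (\<lambda>w. (e w)\<^sup>2) (\<sigma>\<^sup>2)"
      using Ie2 Ee2 by (simp add: has_bochner_integral_iff)
    have hF: "has_bochner_integral M dF (integral\<^sup>L M dF)" using IF by (rule has_bochner_integral_integrable)
    have hN: "has_bochner_integral M dN (integral\<^sup>L M dF)"
      using IN EFN by (simp add: has_bochner_integral_iff)
    have HL: "has_bochner_integral M (\<lambda>w. payoff n (star_H n \<beta>) d i (\<lambda>j. gam w * V j) (gam w))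
        (c\<^sup>2 * expectation (\<lambda>w. (mu w)\<^sup>2) + (2 * c\<^sup>2 * 0 + (c\<^sup>2 * \<sigma>\<^sup>2 + integral\<^sup>L M dF)))"
      unfolding L
      by (intro has_bochner_integral_add has_bochner_integral_mult_right hmu2 hmue he2 hF)
    have HR: "has_bochner_integral M (\<lambda>w. payoff n (star_H n \<beta>) d i (\<lambda>j. mu w * V j) (gam w))
        (c\<^sup>2 * expectation (\<lambda>w. (mu w)\<^sup>2) + (2 * c * 0 + integral\<^sup>L M dF))"
      unfolding R
      by (intro has_bochner_integral_add has_bochner_integral_mult_right hmu2 hmue hN)
    have pos: "c\<^sup>2 * \<sigma>\<^sup>2 > 0" using c0 sig by simp
    show "(\<integral>w. payoff n (star_H n \<beta>) d i (\<lambda>j. gam w * Hinv_one n (star_H n \<beta>) j) (gam w) \<partial>M)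
      > (\<integral>w. payoff n (star_H n \<beta>) d i (\<lambda>j. mu w * Hinv_one n (star_H n \<beta>) j) (gam w) \<partial>M)"
      using has_bochner_integral_integral_eq[OF HL] has_bochner_integral_integral_eq[OF HR] pos
      unfolding V_def by simp
  qed
qed

end
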